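(* Let $n\ge1$ and $\vec p,\vec q\in[0,1]^n$ satisfy $p_i\ge q_i$ for all $i\in\{1,\dots,n\}$. Let $S_{\vec p}$ be a sum of $n$ independent random variables $X_i\sim\mathrm{Ber}(p_i)$, and similarly $S_{\vec q}$. Define $\Delta=\sum_{i=1}^n|p_i-q_i|$, $\sigma_{\vec p}^2=\sum_{i=1}^n p_i(1-p_i)$ and $\Phi(\vec p,\vec q)=\min\big(1,\Delta/\sqrt{\sigma_{\vec p}^2+1}\big)$. Then $$\mathrm{TV}(S_{\vec p},S_{\vec q})\ge\frac1{12}\,\Phi(\vec p,\vec q).$$
   Context: $\mathrm{TV}$ is the total variation distance, $\mathrm{TV}(P,Q)=\frac12\sum_\omega|P(\omega)-Q(\omega)|$, applied to the laws of the random variables. *)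

theory Defs
  imports "HOL-Probability.Probability"
begin

definition sum_bern_pmf :: "nat \<Rightarrow> (nat \<Rightarrow> real) \<Rightarrow> nat pmf" where
  "sum_bern_pmf n p =
     map_pmf (\<lambda>x. \<Sum>i<n. of_bool (x i)) (Pi_pmf {..<n} False (\<lambda>i. bernoulli_pmf (p i)))"

definition TV :: "'a pmf \<Rightarrow> 'a pmf \<Rightarrow> real" where
  "TV P Q = (1/2) * infsum (\<lambda>w. \<bar>pmf P w - pmf Q w\<bar>) UNIV"

end

theory Submission
  imports Defs
begin

definition Ex :: "nat \<Rightarrow> (nat \<Rightarrow> real) \<Rightarrow> (nat \<Rightarrow> real) \<Rightarrow> real" where
  "Ex n x g = measure_pmf.expectation (sum_bern_pmf n x) g"

lemma set_sbp: "set_pmf (sum_bern_pmf n x) \<subseteq> {..n}"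
proof -
  have "(\<Sum>i<n. of_bool (f i)) \<le> n" for f :: "nat \<Rightarrow> bool"
  proof -
    have "(\<Sum>i<n. (of_bool (f i)::nat)) \<le> (\<Sum>i<n. 1)" by (intro sum_mono) auto
    then show ?thesis by simp
  qed
  then show ?thesis unfolding sum_bern_pmf_def by auto
qed

lemma sbp_0: "sum_bern_pmf 0 x = return_pmf 0"
  unfolding sum_bern_pmf_def by simp

lemma sbp_Suc: "sum_bern_pmf (Suc n) x =
   map_pmf (\<lambda>(b,s). s + of_bool b) (pair_pmf (bernoulli_pmf (x n)) (sum_bern_pmf n x))"
proof -
  have e: "{..<Suc n} = insert n {..<n}" by auto
  have s: "(\<Sum>i<Suc n. of_bool ((f(n:=y)) i)) = (\<Sum>i<n. of_bool (f i)) + (of_bool y::nat)" for f y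
    by (simp add: sum.cong)
  have "Pi_pmf {..<Suc n} False (\<lambda>i. bernoulli_pmf (x i)) =
     map_pmf (\<lambda>(y,f). f(n:=y)) (pair_pmf (bernoulli_pmf (x n)) (Pi_pmf {..<n} False (\<lambda>i. bernoulli_pmf (x i))))"
    unfolding e by (rule Pi_pmf_insert) auto
  then show ?thesis
    unfolding sum_bern_pmf_def
    by (simp only: pmf.map_comp pair_map_pmf2 o_def case_prod_beta s apsnd_def map_prod_def fst_conv snd_conv id_apply)
qed

lemma Ex_sum: "Ex n x g = (\<Sum>s\<le>n. g s * pmf (sum_bern_pmf n x) s)"
  unfolding Ex_def using set_sbp
  by (intro integral_measure_pmf_real) auto

lemma Ex_0: "Ex 0 x g = g 0"
  unfolding Ex_def sbp_0 by simp

lemma Ex_Suc: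
  assumes "0 \<le> x n" "x n \<le> 1"
  shows "Ex (Suc n) x g = (1 - x n) * Ex n x g + x n * Ex n x (\<lambda>s. g (Suc s))"
proof -
  let ?M = "pair_pmf (bernoulli_pmf (x n)) (sum_bern_pmf n x)"
  have "Ex (Suc n) x g = measure_pmf.expectation ?M (\<lambda>(b,s). g (s + of_bool b))"
    unfolding Ex_def sbp_Suc by (simp add: case_prod_beta')
  also have "\<dots> = (\<Sum>bs\<in>UNIV \<times> {..n}. (\<lambda>(b,s). g (s + of_bool b)) bs * pmf ?M bs)"
    using set_sbp[of n x] by (intro integral_measure_pmf_real) (auto simp: set_pair_pmf)
  also have "\<dots> = (\<Sum>b\<in>UNIV. \<Sum>s\<le>n. g (s + of_bool b) * (pmf (bernoulli_pmf (x n)) b * pmf (sum_bern_pmf n x) s))"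
    by (subst sum.cartesian_product) (auto simp: pmf_pair intro!: sum.cong)
  also have "\<dots> = (1 - x n) * (\<Sum>s\<le>n. g s * pmf (sum_bern_pmf n x) s) + x n * (\<Sum>s\<le>n. g (Suc s) * pmf (sum_bern_pmf n x) s)"
    using assms by (simp add: UNIV_bool sum_distrib_left algebra_simps)
  finally show ?thesis by (simp add: Ex_sum)
qed

definition valid :: "nat \<Rightarrow> (nat \<Rightarrow> real) \<Rightarrow> bool" where
  "valid n x \<longleftrightarrow> (\<forall>i<n. 0 \<le> x i \<and> x i \<le> 1)"

lemma valid_Suc: "valid (Suc n) x \<Longrightarrow> valid n x \<and> 0 \<le> x n \<and> x n \<le> 1"
  unfolding valid_def by auto

lemma Ex_cong: "valid n x \<Longrightarrow> (\<And>i. i < n \<Longrightarrow> x i = y i) \<Longrightarrow> Ex n x g = Ex n y g"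
proof (induction n arbitrary: g)
  case 0 then show ?case by (simp add: Ex_0)
next
  case (Suc n)
  have v: "valid n x" "0 \<le> x n" "x n \<le> 1" using valid_Suc[OF Suc.prems(1)] by auto
  have "x n = y n" using Suc.prems by auto
  with v Suc show ?case by (simp add: Ex_Suc)
qed

lemma Ex_lin: "valid n x \<Longrightarrow> Ex n x (\<lambda>s. a * f s + b * h s) = a * Ex n x f + b * Ex n x h"
proof (induction n arbitrary: f h)
  case 0 then show ?case by (simp add: Ex_0)
next
  case (Suc n)
  have v: "valid n x" "0 \<le> x n" "x n \<le> 1" using valid_Suc[OF Suc.prems(1)] by auto
  show ?case using v Suc.IH[OF v(1), of f h] Suc.IH[OF v(1), of "\<lambda>s. f (Suc s)" "\<lambda>s. h (Suc s)"]
    by (simp add: Ex_Suc algebra_simps)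
qed

lemma Ex_mono: "valid n x \<Longrightarrow> (\<And>s. f s \<le> h s) \<Longrightarrow> Ex n x f \<le> Ex n x h"
proof (induction n arbitrary: f h)
  case 0 then show ?case by (simp add: Ex_0)
next
  case (Suc n)
  have v: "valid n x" "0 \<le> x n" "x n \<le> 1" using valid_Suc[OF Suc.prems(1)] by auto
  have "Ex n x f \<le> Ex n x h" using Suc.IH[OF v(1)] Suc.prems by auto
  moreover have "Ex n x (\<lambda>s. f (Suc s)) \<le> Ex n x (\<lambda>s. h (Suc s))" using Suc.IH[OF v(1)] Suc.prems by auto
  ultimately show ?case using v
    by (simp add: Ex_Suc add_mono mult_left_mono)
qed

lemma Ex_const: "valid n x \<Longrightarrow> Ex n x (\<lambda>_. c) = c"
proof (induction n)
  case 0 then show ?case by (simp add: Ex_0)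
next
  case (Suc n)
  have v: "valid n x" "0 \<le> x n" "x n \<le> 1" using valid_Suc[OF Suc.prems(1)] by auto
  then show ?case using Suc.IH by (simp add: Ex_Suc algebra_simps)
qed

lemma Ex_sq: "valid n x \<Longrightarrow>
  Ex n x (\<lambda>s. (real s - a)^2) = (\<Sum>i<n. x i * (1 - x i)) + ((\<Sum>i<n. x i) - a)^2"
proof (induction n arbitrary: a)
  case 0 then show ?case by (simp add: Ex_0)
next
  case (Suc n)
  have v: "valid n x" "0 \<le> x n" "x n \<le> 1" using valid_Suc[OF Suc.prems(1)] by auto
  have e: "(\<lambda>s. (real (Suc s) - a)^2) = (\<lambda>s. (real s - (a - 1))^2)" by (auto simp: algebra_simps)
  have "Ex (Suc n) x (\<lambda>s. (real s - a)^2) = (1 - x n) * Ex n x (\<lambda>s. (real s - a)^2) + x n * Ex n x (\<lambda>s. (real s - (a-1))^2)"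
    by (simp only: Ex_Suc[of x n, OF v(2,3)] e)
  also have "\<dots> = (1 - x n) * ((\<Sum>i<n. x i * (1 - x i)) + ((\<Sum>i<n. x i) - a)^2) + x n * ((\<Sum>i<n. x i * (1 - x i)) + ((\<Sum>i<n. x i) - (a-1))^2)"
    by (simp only: Suc.IH[OF v(1)])
  also have "\<dots> = ((\<Sum>i<n. x i * (1 - x i)) + x n * (1 - x n)) + (((\<Sum>i<n. x i) + x n) - a)^2"
    by (simp add: power2_eq_square algebra_simps)
  finally show ?case by simp
qed

lemma Ex_diff: "valid n x \<Longrightarrow> Ex n x (\<lambda>s. f s - h s) = Ex n x f - Ex n x h"
  using Ex_lin[of n x 1 f "-1" h] by simp

definition mix :: "(nat \<Rightarrow> real) \<Rightarrow> (nat \<Rightarrow> real) \<Rightarrow> nat \<Rightarrow> nat \<Rightarrow> real" where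
  "mix x y j i = (if i < j then x i else if i = j then 0 else y i)"

lemma valid_mix: "valid n x \<Longrightarrow> valid n y \<Longrightarrow> valid n (mix x y j)"
  unfolding valid_def mix_def by auto

lemma telescope:
  "valid n x \<Longrightarrow> valid n y \<Longrightarrow>
   Ex n x g - Ex n y g = (\<Sum>j<n. (x j - y j) * Ex n (mix x y j) (\<lambda>s. g (Suc s) - g s))"
proof (induction n arbitrary: g)
  case 0 then show ?case by (simp add: Ex_0)
next
  case (Suc n)
  have vx: "valid n x" "0 \<le> x n" "x n \<le> 1" using valid_Suc[OF Suc.prems(1)] by auto
  have vy: "valid n y" "0 \<le> y n" "y n \<le> 1" using valid_Suc[OF Suc.prems(2)] by auto
  have vm: "valid (Suc n) (mix x y j)" for j using valid_mix[OF Suc.prems] .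
  have vm': "valid n (mix x y j)" for j using valid_mix[OF vx(1) vy(1)] .
  define D where "D = (\<lambda>s. g (Suc s) - g s)"
  have top: "Ex (Suc n) (mix x y n) D = Ex n x (\<lambda>s. g (Suc s)) - Ex n x g"
  proof -
    have "Ex (Suc n) (mix x y n) D = Ex n (mix x y n) D"
      using Ex_Suc[of "mix x y n" n D] by (simp add: mix_def)
    also have "\<dots> = Ex n x D"
      by (rule Ex_cong[OF vm']) (simp add: mix_def)
    also have "\<dots> = Ex n x (\<lambda>s. g (Suc s)) - Ex n x g"
      unfolding D_def by (rule Ex_diff[OF vx(1)])
    finally show ?thesis .
  qed
  have low: "Ex (Suc n) (mix x y j) D = (1 - y n) * Ex n (mix x y j) D + y n * Ex n (mix x y j) (\<lambda>s. D (Suc s))"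
    if "j < n" for j
    using Ex_Suc[of "mix x y j" n D] that vy by (simp add: mix_def)
  have IH1: "Ex n x g - Ex n y g = (\<Sum>j<n. (x j - y j) * Ex n (mix x y j) D)"
    unfolding D_def by (rule Suc.IH[OF vx(1) vy(1)])
  have IH2: "Ex n x (\<lambda>s. g (Suc s)) - Ex n y (\<lambda>s. g (Suc s)) = (\<Sum>j<n. (x j - y j) * Ex n (mix x y j) (\<lambda>s. D (Suc s)))"
    unfolding D_def by (rule Suc.IH[OF vx(1) vy(1)])
  have "(\<Sum>j<Suc n. (x j - y j) * Ex (Suc n) (mix x y j) D)
      = (\<Sum>j<n. (x j - y j) * ((1 - y n) * Ex n (mix x y j) D + y n * Ex n (mix x y j) (\<lambda>s. D (Suc s))))
        + (x n - y n) * (Ex n x (\<lambda>s. g (Suc s)) - Ex n x g)"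
    by (simp add: top low)
  also have "\<dots> = (1 - y n) * (\<Sum>j<n. (x j - y j) * Ex n (mix x y j) D)
        + y n * (\<Sum>j<n. (x j - y j) * Ex n (mix x y j) (\<lambda>s. D (Suc s)))
        + (x n - y n) * (Ex n x (\<lambda>s. g (Suc s)) - Ex n x g)"
  proof -
    have "(\<Sum>j<n. (x j - y j) * ((1 - y n) * Ex n (mix x y j) D + y n * Ex n (mix x y j) (\<lambda>s. D (Suc s))))
      = (1 - y n) * (\<Sum>j<n. (x j - y j) * Ex n (mix x y j) D)
        + y n * (\<Sum>j<n. (x j - y j) * Ex n (mix x y j) (\<lambda>s. D (Suc s)))"
      unfolding sum_distrib_left sum.distrib[symmetric] by (rule sum.cong) (simp_all add: algebra_simps)
    then show ?thesis by simp
  qed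
  also have "\<dots> = Ex (Suc n) x g - Ex (Suc n) y g"
    unfolding IH1[symmetric] IH2[symmetric] Ex_Suc[of x n, OF vx(2,3)] Ex_Suc[of y n, OF vy(2,3)]
    by (simp add: algebra_simps)
  finally show ?case unfolding D_def by simp
qed

lemma TV_ge:
  assumes g: "\<And>k. 0 \<le> g k \<and> g k \<le> 1"
  shows "Ex n p g - Ex n q g \<le> TV (sum_bern_pmf n p) (sum_bern_pmf n q)"
proof -
  define d where "d k = pmf (sum_bern_pmf n p) k - pmf (sum_bern_pmf n q) k" for k
  have z: "d k = 0" if "k \<notin> {..n}" for k
    using that set_sbp[of n p] set_sbp[of n q] unfolding d_def
    by (metis pmf_eq_0_set_pmf subsetD diff_self)
  have "infsum (\<lambda>w. \<bar>d w\<bar>) UNIV = infsum (\<lambda>w. \<bar>d w\<bar>) {..n}"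
    by (rule infsum_cong_neutral) (auto simp: z)
  also have "\<dots> = (\<Sum>k\<le>n. \<bar>d k\<bar>)" by simp
  finally have tv: "TV (sum_bern_pmf n p) (sum_bern_pmf n q) = (1/2) * (\<Sum>k\<le>n. \<bar>d k\<bar>)"
    unfolding TV_def d_def by simp
  have s0: "(\<Sum>k\<le>n. d k) = 0"
    unfolding d_def sum_subtractf using sum_pmf_eq_1[OF _ set_sbp] by simp
  have "Ex n p g - Ex n q g = (\<Sum>k\<le>n. g k * d k)"
    unfolding Ex_sum d_def sum_subtractf[symmetric] by (simp add: algebra_simps)
  also have "\<dots> \<le> (\<Sum>k\<le>n. (\<bar>d k\<bar> + d k) / 2)"
  proof (rule sum_mono)
    fix k
    show "g k * d k \<le> (\<bar>d k\<bar> + d k) / 2"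
    proof (cases "d k \<ge> 0")
      case True
      then have "g k * d k \<le> 1 * d k" using g[of k] by (intro mult_right_mono) auto
      then show ?thesis using True by simp
    next
      case False
      then have "g k * d k \<le> 0" using g[of k] by (simp add: mult_nonneg_nonpos)
      then show ?thesis using False by simp
    qed
  qed
  also have "\<dots> = (1/2) * (\<Sum>k\<le>n. \<bar>d k\<bar>) + (1/2) * (\<Sum>k\<le>n. d k)"
    by (simp add: sum_divide_distrib[symmetric] sum.distrib)
  finally show ?thesis using tv s0 by simp
qed

lemma clamp_step:
  fixes u R W :: real
  assumes R: "R > 0" and W: "W = 2 * R + 1"
  shows "min 1 (max 0 ((u + 1/2) / W + 1/2)) - min 1 (max 0 ((u - 1/2) / W + 1/2)) \<ge> (1/W) * (1 - u^2 / R^2)"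
    and "min 1 (max 0 ((u + 1/2) / W + 1/2)) - min 1 (max 0 ((u - 1/2) / W + 1/2)) \<ge> 0"
proof -
  have Wp: "W > 0" using R W by simp
  have mono: "(u - 1/2) / W + 1/2 \<le> (u + 1/2) / W + 1/2" using Wp by (simp add: divide_right_mono)
  then show "min 1 (max 0 ((u + 1/2) / W + 1/2)) - min 1 (max 0 ((u - 1/2) / W + 1/2)) \<ge> 0" by linarith
  show "min 1 (max 0 ((u + 1/2) / W + 1/2)) - min 1 (max 0 ((u - 1/2) / W + 1/2)) \<ge> (1/W) * (1 - u^2 / R^2)"
  proof (cases "\<bar>u\<bar> \<le> R")
    case True
    have a: "(u - 1/2) / W + 1/2 \<ge> 0"
    proof -
      have "(u - 1/2) / W \<ge> (-R - 1/2) / W" using True Wp by (intro divide_right_mono) auto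
      also have "(-R - 1/2) / W = - 1/2" using W Wp by (simp add: field_simps)
      finally show ?thesis by linarith
    qed
    have b: "(u + 1/2) / W + 1/2 \<le> 1"
    proof -
      have "(u + 1/2) / W \<le> (R + 1/2) / W" using True Wp by (intro divide_right_mono) auto
      also have "(R + 1/2) / W = 1/2" using W Wp by (simp add: field_simps)
      finally show ?thesis by linarith
    qed
    have eq: "min 1 (max 0 ((u + 1/2) / W + 1/2)) - min 1 (max 0 ((u - 1/2) / W + 1/2)) = 1 / W"
    proof -
      have "(u + 1/2) / W - (u - 1/2) / W = 1 / W" using Wp by (simp add: field_simps)
      then show ?thesis using a b mono by simp
    qed
    have "(1/W) * (1 - u^2 / R^2) \<le> (1/W) * 1"
      using Wp R by (intro mult_left_mono) auto
    then show ?thesis using eq by simp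
  next
    case False
    then have "u^2 > R^2" using R by (metis abs_le_square_iff abs_of_pos not_le)
    then have "u^2 / R^2 > 1" using R by simp
    then have "(1/W) * (1 - u^2 / R^2) \<le> 0" using Wp by (intro mult_nonneg_nonpos) auto
    then show ?thesis using mono by linarith
  qed
qed

lemma arith_B:
  fixes s v d :: real
  assumes "s > 0" "s^2 = v + 1" "v \<ge> 0" "0 \<le> d" "d \<le> s"
  shows "(1 / (2 * (3 * s) + 1)) * (1 - (v + d + ((d + 1) / 2)^2) / (3 * s)^2) \<ge> 1 / (12 * s)"
proof -
  have s1: "s \<ge> 1"
  proof -
    have "(1::real)^2 \<le> s^2" using assms by simp
    then show ?thesis using power2_le_imp_le[of 1 s] assms(1) by linarith
  qed
  have "((d + 1) / 2)^2 \<le> s^2"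
  proof -
    have "(d+1)/2 \<le> s" using assms s1 by simp
    then show ?thesis using assms by (intro power_mono) auto
  qed
  moreover have "d \<le> s^2"
  proof -
    have "s * 1 \<le> s * s" using s1 assms by (intro mult_left_mono) auto
    then show ?thesis using assms by (simp only: power2_eq_square)
  qed
  ultimately have X: "v + d + ((d + 1) / 2)^2 \<le> 3 * s^2" using assms by linarith
  have "(v + d + ((d + 1) / 2)^2) / (3 * s)^2 \<le> (3 * s^2) / (3 * s)^2"
    using X assms by (intro divide_right_mono) auto
  also have "\<dots> = 1/3" using assms by (simp add: power2_eq_square field_simps)
  finally have "1 - (v + d + ((d + 1) / 2)^2) / (3 * s)^2 \<ge> 2/3" by simp
  then have "(1 / (2 * (3 * s) + 1)) * (1 - (v + d + ((d + 1) / 2)^2) / (3 * s)^2) \<ge> (1 / (2 * (3 * s) + 1)) * (2/3)"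
    using assms by (intro mult_left_mono) auto
  moreover have "(1 / (2 * (3 * s) + 1)) * (2/3) \<ge> 1 / (12 * s)"
    using assms s1 by (simp add: field_simps)
  ultimately show ?thesis by linarith
qed

lemma core:
  assumes vp: "valid n p" and vq: "valid n q" and le: "\<And>i. i < n \<Longrightarrow> q i \<le> p i"
    and sp: "s > 0" and s2: "s^2 = (\<Sum>i<n. p i * (1 - p i)) + 1"
    and Ds: "(\<Sum>i<n. p i - q i) \<le> s"
  shows "\<exists>g. (\<forall>k. 0 \<le> g k \<and> g k \<le> 1) \<and> (\<forall>k. g k \<le> g (Suc k)) \<and>
             Ex n p g - Ex n q g \<ge> (\<Sum>i<n. p i - q i) / (12 * s)"
proof -
  define \<Delta> where "\<Delta> = (\<Sum>i<n. p i - q i)"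
  define v where "v = (\<Sum>i<n. p i * (1 - p i))"
  define a where "a = ((\<Sum>i<n. q i) + (\<Sum>i<n. p i) - 1) / 2"
  define R where "R = 3 * s"
  define W where "W = 2 * R + 1"
  define g where "g k = min 1 (max 0 ((real k - a - 1/2) / W + 1/2))" for k
  have Rp: "R > 0" using sp R_def by simp
  have Wp: "W > 0" using Rp W_def by simp
  have \<Delta>0: "\<Delta> \<ge> 0" unfolding \<Delta>_def using le by (intro sum_nonneg) auto
  have v0: "v \<ge> 0" unfolding v_def using vp by (intro sum_nonneg) (auto simp: valid_def)
  have gS: "g (Suc k) = min 1 (max 0 (((real k - a) + 1/2) / W + 1/2))" for k
    unfolding g_def by (simp add: algebra_simps)
  have gk: "g k = min 1 (max 0 (((real k - a) - 1/2) / W + 1/2))" for k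
    unfolding g_def by (simp add: algebra_simps)
  have step1: "g (Suc k) - g k \<ge> (1/W) * (1 - (real k - a)^2 / R^2)" for k
    unfolding gS gk[of k] by (rule clamp_step(1)[OF Rp W_def])
  have step0: "g k \<le> g (Suc k)" for k
    using clamp_step(2)[OF Rp W_def, of "real k - a"] unfolding gS gk[of k] by linarith
  have g01: "0 \<le> g k \<and> g k \<le> 1" for k unfolding g_def by simp
  define B where "B = (1/W) * (1 - (v + \<Delta> + ((\<Delta> + 1) / 2)^2) / R^2)"
  have termB: "Ex n (mix p q j) (\<lambda>k. g (Suc k) - g k) \<ge> B" if j: "j < n" for j
  proof -
    let ?x = "mix p q j"
    have vx: "valid n ?x" by (rule valid_mix[OF vp vq])
    define V where "V = (\<Sum>i<n. ?x i * (1 - ?x i))"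
    define M where "M = (\<Sum>i<n. ?x i)"
    have "Ex n ?x (\<lambda>k. (1/W) * 1 + (-(1/(W * R^2))) * (real k - a)^2) \<le> Ex n ?x (\<lambda>k. g (Suc k) - g k)"
    proof (rule Ex_mono[OF vx])
      fix k
      have "(1/W) * 1 + (-(1/(W * R^2))) * (real k - a)^2 = (1/W) * (1 - (real k - a)^2 / R^2)"
        using Wp Rp by (simp add: field_simps)
      then show "(1/W) * 1 + (-(1/(W * R^2))) * (real k - a)^2 \<le> g (Suc k) - g k" using step1[of k] by simp
    qed
    moreover have "Ex n ?x (\<lambda>k. (1/W) * 1 + (-(1/(W * R^2))) * (real k - a)^2) = (1/W) * 1 + (-(1/(W * R^2))) * (V + (M - a)^2)"
      unfolding Ex_lin[OF vx] Ex_const[OF vx] Ex_sq[OF vx] V_def M_def by simp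
    moreover have "V \<le> v + \<Delta>"
    proof -
      have "V \<le> (\<Sum>i<n. p i * (1 - p i) + (p i - q i))"
        unfolding V_def
      proof (rule sum_mono)
        fix i assume i: "i \<in> {..<n}"
        have pi: "0 \<le> p i" "p i \<le> 1" "0 \<le> q i" "q i \<le> 1" "q i \<le> p i" using vp vq le i by (auto simp: valid_def)
        have "q i * (1 - q i) \<le> p i * (1 - p i) + (p i - q i)"
        proof -
          have "0 \<le> (p i - q i) * (2 - p i - q i)" using pi by (intro mult_nonneg_nonneg) auto
          then show ?thesis by (simp add: algebra_simps)
        qed
        moreover have "0 \<le> p i * (1 - p i) + (p i - q i)" using pi by simp
        ultimately show "?x i * (1 - ?x i) \<le> p i * (1 - p i) + (p i - q i)"
          unfolding mix_def using pi by auto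
      qed
      then show ?thesis unfolding v_def \<Delta>_def sum.distrib by simp
    qed
    moreover have "(M - a)^2 \<le> ((\<Delta> + 1) / 2)^2"
    proof -
      have up: "M \<le> (\<Sum>i<n. p i)" unfolding M_def
        using vp vq le by (intro sum_mono) (auto simp: mix_def valid_def)
      have "(\<Sum>i<n. q i - (if i = j then 1 else 0)) \<le> M" unfolding M_def
        using vp vq le by (intro sum_mono) (auto simp: mix_def valid_def)
      moreover have "(\<Sum>i<n. q i - (if i = j then 1 else 0)) = (\<Sum>i<n. q i) - 1"
        using j by (simp add: sum_subtractf)
      ultimately have lo: "(\<Sum>i<n. q i) - 1 \<le> M" by simp
      have "\<Delta> = (\<Sum>i<n. p i) - (\<Sum>i<n. q i)" unfolding \<Delta>_def by (simp add: sum_subtractf)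
      then have "\<bar>M - a\<bar> \<le> (\<Delta> + 1) / 2" using up lo unfolding a_def abs_le_iff by (auto simp: field_simps)
      then have "\<bar>M - a\<bar>^2 \<le> ((\<Delta> + 1) / 2)^2" by (intro power_mono) auto
      then show ?thesis by simp
    qed
    ultimately have "Ex n ?x (\<lambda>k. g (Suc k) - g k) \<ge> (1/W) * 1 + (-(1/(W * R^2))) * (v + \<Delta> + ((\<Delta> + 1) / 2)^2)"
    proof -
      assume A: "Ex n ?x (\<lambda>k. (1/W) * 1 + (-(1/(W * R^2))) * (real k - a)^2) \<le> Ex n ?x (\<lambda>k. g (Suc k) - g k)"
        "Ex n ?x (\<lambda>k. (1/W) * 1 + (-(1/(W * R^2))) * (real k - a)^2) = (1/W) * 1 + (-(1/(W * R^2))) * (V + (M - a)^2)"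
        "V \<le> v + \<Delta>" "(M - a)^2 \<le> ((\<Delta> + 1) / 2)^2"
      have "(1/(W * R^2)) * (V + (M - a)^2) \<le> (1/(W * R^2)) * (v + \<Delta> + ((\<Delta> + 1) / 2)^2)"
        using A(3,4) Wp Rp by (intro mult_left_mono) auto
      then show ?thesis using A(1,2) by simp
    qed
    moreover have "(1/W) * 1 + (-(1/(W * R^2))) * (v + \<Delta> + ((\<Delta> + 1) / 2)^2) = B"
      unfolding B_def using Wp Rp by (simp add: field_simps)
    ultimately show ?thesis by simp
  qed
  have "Ex n p g - Ex n q g = (\<Sum>j<n. (p j - q j) * Ex n (mix p q j) (\<lambda>k. g (Suc k) - g k))"
    by (rule telescope[OF vp vq])
  also have "\<dots> \<ge> (\<Sum>j<n. (p j - q j) * B)"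
    using termB le by (intro sum_mono mult_left_mono) auto
  finally have "Ex n p g - Ex n q g \<ge> \<Delta> * B" unfolding \<Delta>_def by (simp add: sum_distrib_right)
  moreover have "B \<ge> 1 / (12 * s)"
    unfolding B_def W_def R_def
    by (rule arith_B[OF sp s2[folded v_def] v0 \<Delta>0 Ds[folded \<Delta>_def]])
  ultimately have "Ex n p g - Ex n q g \<ge> \<Delta> / (12 * s)"
  proof -
    have "\<Delta> * (1 / (12 * s)) \<le> \<Delta> * B" using \<Delta>0 \<open>B \<ge> 1 / (12 * s)\<close> by (intro mult_left_mono)
    then show ?thesis using \<open>Ex n p g - Ex n q g \<ge> \<Delta> * B\<close> by simp
  qed
  then show ?thesis using g01 step0 unfolding \<Delta>_def by blast
qed

lemma Ex_mono_param:
  assumes vx: "valid n x" and vy: "valid n y" and le: "\<And>i. i < n \<Longrightarrow> y i \<le> x i"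
    and g: "\<And>k. g k \<le> g (Suc k)"
  shows "Ex n y g \<le> Ex n x g"
proof -
  have "0 \<le> (\<Sum>j<n. (x j - y j) * Ex n (mix x y j) (\<lambda>s. g (Suc s) - g s))"
  proof (intro sum_nonneg mult_nonneg_nonneg)
    fix j assume "j \<in> {..<n}"
    then show "0 \<le> x j - y j" using le by auto
    have "Ex n (mix x y j) (\<lambda>_. 0) \<le> Ex n (mix x y j) (\<lambda>s. g (Suc s) - g s)"
      using g by (intro Ex_mono[OF valid_mix[OF vx vy]]) auto
    then show "0 \<le> Ex n (mix x y j) (\<lambda>s. g (Suc s) - g s)"
      using Ex_const[OF valid_mix[OF vx vy]] by simp
  qed
  then show ?thesis using telescope[OF vx vy, of g] by simp
qed

theorem theorem2:
  fixes n :: nat and p q :: "nat \<Rightarrow> real"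
  assumes "n \<ge> 1"
    and "\<And>i. i < n \<Longrightarrow> 0 \<le> p i \<and> p i \<le> 1"
    and "\<And>i. i < n \<Longrightarrow> 0 \<le> q i \<and> q i \<le> 1"
    and "\<And>i. i < n \<Longrightarrow> p i \<ge> q i"
  shows "TV (sum_bern_pmf n p) (sum_bern_pmf n q) \<ge>
           (1/12) * min 1 ((\<Sum>i<n. \<bar>p i - q i\<bar>) / sqrt ((\<Sum>i<n. p i * (1 - p i)) + 1))"
proof -
  have vp: "valid n p" and vq: "valid n q" using assms(2,3) by (auto simp: valid_def)
  define v where "v = (\<Sum>i<n. p i * (1 - p i))"
  have v0: "v \<ge> 0" unfolding v_def using assms(2) by (intro sum_nonneg) auto
  define s where "s = sqrt (v + 1)"
  have sp: "s > 0" unfolding s_def using v0 by simp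
  have s2: "s^2 = (\<Sum>i<n. p i * (1 - p i)) + 1" unfolding s_def v_def[symmetric] using v0 by simp
  define \<Delta> where "\<Delta> = (\<Sum>i<n. p i - q i)"
  have \<Delta>abs: "(\<Sum>i<n. \<bar>p i - q i\<bar>) = \<Delta>" unfolding \<Delta>_def using assms(4) by (intro sum.cong) auto
  have \<Delta>0: "\<Delta> \<ge> 0" unfolding \<Delta>_def using assms(4) by (intro sum_nonneg) auto
  have goal: "?thesis \<longleftrightarrow> TV (sum_bern_pmf n p) (sum_bern_pmf n q) \<ge> (1/12) * min 1 (\<Delta> / s)"
    unfolding \<Delta>abs s_def v_def ..
  have main: "TV (sum_bern_pmf n p) (sum_bern_pmf n q) \<ge> (1/12) * min 1 (\<Delta> / s)"
  proof (cases "\<Delta> \<le> s")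
    case True
    obtain g where g01: "\<forall>k. 0 \<le> g k \<and> g k \<le> 1" and gE: "Ex n p g - Ex n q g \<ge> \<Delta> / (12 * s)"
      using core[OF vp vq _ sp s2 True[unfolded \<Delta>_def]] assms(4) unfolding \<Delta>_def by blast
    have "TV (sum_bern_pmf n p) (sum_bern_pmf n q) \<ge> \<Delta> / (12 * s)"
      using TV_ge[of g n p q] g01 gE by auto
    moreover have "(1/12) * min 1 (\<Delta> / s) \<le> \<Delta> / (12 * s)" by simp
    ultimately show ?thesis by linarith
  next
    case False
    define lam where "lam = s / \<Delta>"
    have \<Delta>p: "\<Delta> > 0" using False sp by linarith
    have l0: "0 \<le> lam" "lam \<le> 1" unfolding lam_def using False sp \<Delta>p by auto
    define q' where "q' i = p i - lam * (p i - q i)" for i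
    have q'le: "q' i \<le> p i" if "i < n" for i
      unfolding q'_def using assms(4)[OF that] l0 by simp
    have qq': "q i \<le> q' i" if "i < n" for i
    proof -
      have "lam * (p i - q i) \<le> 1 * (p i - q i)" using assms(4)[OF that] l0 by (intro mult_right_mono) auto
      then show ?thesis unfolding q'_def by simp
    qed
    have vq': "valid n q'" unfolding valid_def using q'le qq' vp vq by (force simp: valid_def)
    have "(\<Sum>i<n. p i - q' i) = lam * \<Delta>" unfolding q'_def \<Delta>_def by (simp add: sum_distrib_left)
    also have "\<dots> = s" unfolding lam_def using \<Delta>p by simp
    finally have D': "(\<Sum>i<n. p i - q' i) = s" .
    obtain g where g01: "\<forall>k. 0 \<le> g k \<and> g k \<le> 1" and gm: "\<forall>k. g k \<le> g (Suc k)"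
      and gE: "Ex n p g - Ex n q' g \<ge> (\<Sum>i<n. p i - q' i) / (12 * s)"
      using core[OF vp vq' q'le sp s2] D' by auto
    have "Ex n q g \<le> Ex n q' g" using Ex_mono_param[OF vq' vq qq'] gm by auto
    moreover have "(\<Sum>i<n. p i - q' i) / (12 * s) = 1/12" using D' sp by simp
    ultimately have "TV (sum_bern_pmf n p) (sum_bern_pmf n q) \<ge> 1/12"
      using TV_ge[of g n p q] g01 gE by auto
    moreover have "(1/12) * min 1 (\<Delta> / s) \<le> 1/12" by simp
    ultimately show ?thesis by linarith
  qed
  then show ?thesis using goal by simp
qed

end
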